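(* Let $\varphi_A(X):=\sum_{i=1}^nA_iXA_i^*$ ($n\in\mathbb N$ or $n=\infty$) be a $w^*$-continuous completely positive linear map on $B(\mathcal H)$, and assume there is a positive operator $X\in B(\mathcal H)$, $X\ne0$, with $\varphi_A(X)\le X$. If one of the following holds, then there is a nontrivial subspace of $\mathcal H$ invariant under every $A_i$, $i=1,\dots,n$: (i) $X$ is not injective; (ii) $X$ is not pure with respect to $\varphi_A$ (i.e. $\varphi_A^k(X)$ does not converge strongly to $0$) and there is $h\in\mathcal H$, $h\ne0$, with $\lim_{k\to\infty}\varphi_A^k(X)h=0$; (iii) $\varphi_A(X)\ne X$ and the orbit of $X$ under $\varphi_A$ has a nonzero fixed point, i.e. there is $h\ne0$ with $\varphi_A^k(X)h=Xh$ for all $k=1,2,\dots$. *)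

theory Defs
  imports "HOL-Analysis.Analysis"
begin

class complex_inner = real_normed_vector +
  fixes scaleC :: "complex \<Rightarrow> 'a \<Rightarrow> 'a"
    and cinner :: "'a \<Rightarrow> 'a \<Rightarrow> complex"
  assumes scaleC_add_right: "scaleC c (x + y) = scaleC c x + scaleC c y"
    and scaleC_add_left: "scaleC (c + d) x = scaleC c x + scaleC d x"
    and scaleC_scaleC: "scaleC c (scaleC d x) = scaleC (c * d) x"
    and scaleC_one: "scaleC 1 x = x"
    and scaleR_scaleC: "scaleR r x = scaleC (complex_of_real r) x"
    and cinner_commute: "cinner x y = cnj (cinner y x)"
    and cinner_add_left: "cinner (x + y) z = cinner x z + cinner y z"
    and cinner_scaleC_left: "cinner (scaleC c x) y = c * cinner x y"
    and cinner_nonneg: "0 \<le> Re (cinner x x)"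
    and cinner_eq_zero_iff: "cinner x x = 0 \<longleftrightarrow> x = 0"
    and norm_eq_sqrt_cinner: "norm x = sqrt (Re (cinner x x))"

class chilbert = complex_inner + complete_space

definition bounded_clinear :: "('a::complex_inner \<Rightarrow> 'b::complex_inner) \<Rightarrow> bool" where
  "bounded_clinear f \<longleftrightarrow> bounded_linear f \<and> (\<forall>c x. f (scaleC c x) = scaleC c (f x))"

definition adj :: "('a::complex_inner \<Rightarrow> 'a) \<Rightarrow> ('a \<Rightarrow> 'a)" where
  "adj A = (THE B. \<forall>x y. cinner (A x) y = cinner x (B y))"

definition positive_op :: "('a::complex_inner \<Rightarrow> 'a) \<Rightarrow> bool" where
  "positive_op X \<longleftrightarrow> bounded_clinear X \<and>
     (\<forall>h. Im (cinner (X h) h) = 0 \<and> 0 \<le> Re (cinner (X h) h))"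

definition op_le :: "('a::complex_inner \<Rightarrow> 'a) \<Rightarrow> ('a \<Rightarrow> 'a) \<Rightarrow> bool" where
  "op_le X Y \<longleftrightarrow> positive_op (\<lambda>h. Y h - X h)"

text \<open>Complex linear subspaces; "subspace" in the invariant subspace problem means
  closed linear subspace.\<close>
definition csubspace :: "'a::complex_inner set \<Rightarrow> bool" where
  "csubspace S \<longleftrightarrow> 0 \<in> S \<and> (\<forall>x\<in>S. \<forall>y\<in>S. x + y \<in> S) \<and> (\<forall>c. \<forall>x\<in>S. scaleC c x \<in> S)"

definition closed_csubspace :: "'a::complex_inner set \<Rightarrow> bool" where
  "closed_csubspace S \<longleftrightarrow> csubspace S \<and> closed S"

text \<open>The completely positive map \<open>\<phi>_A(X) = \<Sum>_{i\<in>I} A_i X A_i^*\<close>, the series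
  converging in the strong operator topology (pointwise, unconditionally).\<close>
definition phiA :: "(nat \<Rightarrow> 'a::complex_inner \<Rightarrow> 'a) \<Rightarrow> nat set \<Rightarrow> ('a \<Rightarrow> 'a) \<Rightarrow> ('a \<Rightarrow> 'a)" where
  "phiA A I X = (\<lambda>h. \<Sum>\<^sub>\<infinity>i\<in>I. A i (X (adj (A i) h)))"

end

theory Submission
  imports Defs
begin


lemma cinner_zero_left[simp]: "cinner 0 y = 0"
  for y :: "'a::complex_inner"
  using cinner_add_left[of 0 0 y] by simp

lemma cinner_minus_left: "cinner (- x) y = - cinner x y"
  for x :: "'a::complex_inner"
  using minus_unique[of "cinner x y"] cinner_add_left[of x "-x" y] by simp

lemma cinner_diff_left: "cinner (x - y) z = cinner x z - cinner y z"
  for x :: "'a::complex_inner"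
  using cinner_add_left[of x "-y" z] cinner_minus_left[of y z] by simp

lemma cinner_add_right: "cinner x (y + z) = cinner x y + cinner x z"
  for x :: "'a::complex_inner"
  by (metis cinner_commute cinner_add_left complex_cnj_add)

lemma cinner_scaleC_right: "cinner x (scaleC c y) = cnj c * cinner x y"
  for x :: "'a::complex_inner"
  by (metis cinner_commute cinner_scaleC_left complex_cnj_mult)

lemma cinner_zero_right[simp]: "cinner x 0 = 0"
  for x :: "'a::complex_inner"
  by (metis cinner_commute cinner_zero_left complex_cnj_zero)

lemma cinner_minus_right: "cinner x (- y) = - cinner x y"
  for x :: "'a::complex_inner"
  by (metis cinner_commute cinner_minus_left complex_cnj_minus)

lemma cinner_diff_right: "cinner x (y - z) = cinner x y - cinner x z"
  for x :: "'a::complex_inner"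
  by (metis cinner_commute cinner_diff_left complex_cnj_diff)

lemma cinner_scaleR_left: "cinner (scaleR r x) y = of_real r * cinner x y"
  for x :: "'a::complex_inner"
  by (simp add: scaleR_scaleC cinner_scaleC_left)

lemma cinner_scaleR_right: "cinner x (scaleR r y) = of_real r * cinner x y"
  for x :: "'a::complex_inner"
  by (simp add: scaleR_scaleC cinner_scaleC_right)

lemma cinner_sum_left: "cinner (sum f F) y = (\<Sum>i\<in>F. cinner (f i) y)"
  for y :: "'a::complex_inner"
  by (induction F rule: infinite_finite_induct) (auto simp: cinner_add_left)

lemma cinner_sum_right: "cinner y (sum f F) = (\<Sum>i\<in>F. cinner y (f i))"
  for y :: "'a::complex_inner"
  by (induction F rule: infinite_finite_induct) (auto simp: cinner_add_right)

lemma cinner_self_real: "Im (cinner x x) = 0"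
  for x :: "'a::complex_inner"
  using cinner_commute[of x x] by (metis Im_complex_div_lemma complex_cnj_cancel_iff complex_div_cnj complex_mod_cnj mult.commute Reals_cnj_iff complex_is_Real_iff)

lemma cinner_self_eq: "cinner x x = complex_of_real ((norm x)^2)"
  for x :: "'a::complex_inner"
  using cinner_self_real[of x] cinner_nonneg[of x] norm_eq_sqrt_cinner[of x]
  by (simp add: complex_eq_iff)

lemma norm_sq_cinner: "(norm x)^2 = Re (cinner x x)"
  for x :: "'a::complex_inner"
  by (simp add: cinner_self_eq)

lemma scaleC_zero_right[simp]: "scaleC c 0 = 0"
  for y :: "'a::complex_inner"
  using scaleC_add_right[of c 0 0] by simp

lemma scaleC_zero_left[simp]: "scaleC 0 x = 0"
  for x :: "'a::complex_inner"
  by (metis scaleR_zero_left scaleR_scaleC of_real_0)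

lemma scaleC_minus_right: "scaleC c (- x) = - scaleC c x"
  for x :: "'a::complex_inner"
  using minus_unique[of "scaleC c x"] scaleC_add_right[of c x "-x"] by simp

lemma scaleC_diff_right: "scaleC c (x - y) = scaleC c x - scaleC c y"
  for x :: "'a::complex_inner"
  using scaleC_add_right[of c x "-y"] scaleC_minus_right[of c y] by simp

lemma scaleC_minus_left: "scaleC (- c) x = - scaleC c x"
  for x :: "'a::complex_inner"
  using minus_unique[of "scaleC c x"] scaleC_add_left[of c "-c" x] by simp

lemma scaleC_diff_left: "scaleC (c - d) x = scaleC c x - scaleC d x"
  for x :: "'a::complex_inner"
  using scaleC_add_left[of c "-d" x] scaleC_minus_left[of d x] by simp

lemma scaleC_of_real: "scaleC (complex_of_real r) x = scaleR r x"
  for x :: "'a::complex_inner"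
  by (simp add: scaleR_scaleC)

lemma cinner_eq_zero_iff': "cinner x x = 0 \<longleftrightarrow> x = 0"
  by (rule cinner_eq_zero_iff)

lemma norm_scaleC: "norm (scaleC c x) = cmod c * norm x"
  for x :: "'a::complex_inner"
proof -
  have e: "cinner (scaleC c x) (scaleC c x) = c * cnj c * cinner x x"
    by (simp add: cinner_scaleC_left cinner_scaleC_right mult.assoc)
  have "(norm (scaleC c x))^2 = Re (cinner (scaleC c x) (scaleC c x))" by (rule norm_sq_cinner)
  also have "\<dots> = (cmod c)^2 * (norm x)^2"
    unfolding e by (simp only: cinner_self_eq complex_norm_square[symmetric] of_real_mult[symmetric] Re_complex_of_real)
  finally have "(norm (scaleC c x))^2 = (cmod c * norm x)^2" by (simp add: power_mult_distrib)
  then show ?thesis by (simp add: power2_eq_iff_nonneg)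
qed

lemma norm_diff_scaleC_sq:
  "(norm (x - scaleC s y))^2 = (norm x)^2 - 2 * Re (cnj s * cinner x y) + (cmod s)^2 * (norm y)^2"
proof -
  have "(norm (x - scaleC s y))^2 = Re (cinner (x - scaleC s y) (x - scaleC s y))" by (rule norm_sq_cinner)
  also have "cinner (x - scaleC s y) (x - scaleC s y) =
     cinner x x - cnj s * cinner x y - s * cinner y x + s * cnj s * cinner y y"
    by (simp add: cinner_diff_left cinner_diff_right cinner_scaleC_left cinner_scaleC_right algebra_simps)
  also have "s * cinner y x = cnj (cnj s * cinner x y)"
    by (metis cinner_commute complex_cnj_cnj complex_cnj_mult)
  finally show ?thesis
    by (simp add: cinner_self_eq complex_mult_cnj cmod_power2)
qed

lemma norm_add_sq: "(norm (x + y))^2 = (norm x)^2 + (norm y)^2 + 2 * Re (cinner x y)"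
  for x :: "'a::complex_inner"
proof -
  have e: "cinner (x + y) (x + y) = cinner x x + cinner y y + (cinner x y + cinner y x)"
    by (simp add: cinner_add_left cinner_add_right algebra_simps)
  have e2: "Re (cinner x y + cinner y x) = 2 * Re (cinner x y)"
    using cinner_commute[of y x] by simp
  have "(norm (x + y))^2 = Re (cinner (x + y) (x + y))" by (rule norm_sq_cinner)
  also have "\<dots> = Re (cinner x x) + Re (cinner y y) + Re (cinner x y + cinner y x)"
    unfolding e by simp
  finally show ?thesis unfolding e2 by (simp add: cinner_self_eq)
qed

lemma norm_diff_sq: "(norm (x - y))^2 = (norm x)^2 + (norm y)^2 - 2 * Re (cinner x y)"
  for x :: "'a::complex_inner"
  using norm_diff_scaleC_sq[of x 1 y] by (simp add: scaleC_one)

lemma quad_ineq: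
  fixes a b c :: real
  assumes "\<And>t. 0 \<le> a - 2 * b * t + c * t^2" "0 \<le> c"
  shows "b^2 \<le> a * c"
proof (cases "c = 0")
  case True
  show ?thesis
  proof (rule ccontr)
    assume "\<not> ?thesis"
    then have "b \<noteq> 0" using True by simp
    have "0 \<le> a - 2 * b * ((a + 1) / (2 * b))" using assms(1)[of "(a+1)/(2*b)"] True by simp
    also have "\<dots> = -1" using \<open>b \<noteq> 0\<close> by (simp add: field_simps)
    finally show False by simp
  qed
next
  case False
  then have c: "c > 0" using assms(2) by simp
  have "0 \<le> a - 2 * b * (b / c) + c * (b/c)^2" by (rule assms(1))
  also have "\<dots> = a - b^2 / c" using c by (simp add: field_simps power2_eq_square)
  finally show ?thesis using c by (simp add: field_simps)
qed

lemma norm_diff_t_sq: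
  fixes x y :: "'a::complex_inner"
  shows "(norm (x - scaleC (of_real t * cinner x y) y))^2 =
    (norm x)^2 - 2 * ((cmod (cinner x y))^2) * t + ((cmod (cinner x y))^2 * (norm y)^2) * t^2"
proof -
  let ?c = "cinner x y"
  have e1: "cnj (of_real t * ?c) * ?c = of_real (t * (cmod ?c)^2)"
    by (simp only: complex_cnj_mult complex_cnj_complex_of_real complex_norm_square of_real_mult) (simp add: mult_ac)
  have e2: "(cmod (of_real t * ?c))^2 = t^2 * (cmod ?c)^2" by (simp add: norm_mult power_mult_distrib)
  show ?thesis
    unfolding norm_diff_scaleC_sq e1 e2 Re_complex_of_real by (simp add: algebra_simps)
qed

lemma cauchy_schwarz: "cmod (cinner x y) \<le> norm x * norm y"
  for x :: "'a::complex_inner"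
proof -
  let ?c = "cinner x y"
  have "\<And>t::real. 0 \<le> (norm x)^2 - 2 * ((cmod ?c)^2) * t + ((cmod ?c)^2 * (norm y)^2) * t^2"
  proof -
    fix t :: real
    have e1: "cnj (of_real t * ?c) * ?c = of_real (t * (cmod ?c)^2)"
      by (simp only: complex_cnj_mult complex_cnj_complex_of_real complex_norm_square of_real_mult) (simp add: mult_ac)
    have e2: "(cmod (of_real t * ?c))^2 = t^2 * (cmod ?c)^2" by (simp add: norm_mult power_mult_distrib)
    have "0 \<le> (norm (x - scaleC (of_real t * ?c) y))^2" by simp
    also have "\<dots> = (norm x)^2 - 2 * ((cmod ?c)^2) * t + ((cmod ?c)^2 * (norm y)^2) * t^2"
      unfolding norm_diff_scaleC_sq e1 e2 Re_complex_of_real by (simp add: algebra_simps)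
    finally show "0 \<le> (norm x)^2 - 2 * ((cmod ?c)^2) * t + ((cmod ?c)^2 * (norm y)^2) * t^2" .
  qed
  from quad_ineq[OF this] have "((cmod ?c)^2)^2 \<le> (norm x)^2 * ((cmod ?c)^2 * (norm y)^2)" by simp
  then have "(cmod ?c)^2 * (cmod ?c)^2 \<le> (cmod ?c)^2 * ((norm x)^2 * (norm y)^2)"
    by (simp add: power2_eq_square mult_ac)
  then have "(cmod ?c)^2 \<le> (norm x * norm y)^2 \<or> cmod ?c = 0"
  proof (cases "cmod ?c = 0")
    case False
    then have "(cmod ?c)^2 > 0" by simp
    then have "(cmod ?c)^2 \<le> (norm x)^2 * (norm y)^2"
      using mult_left_le_imp_le[OF \<open>(cmod ?c)^2 * (cmod ?c)^2 \<le> (cmod ?c)^2 * ((norm x)^2 * (norm y)^2)\<close>] by blast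
    then show ?thesis by (simp add: power_mult_distrib)
  qed simp
  then show ?thesis
    by (metis norm_ge_zero power2_le_imp_le mult_nonneg_nonneg)
qed


lemma bl_cinner_left: "bounded_linear (\<lambda>x::'a::complex_inner. cinner x y)"
  by (rule bounded_linear_intro[where K="norm y"])
     (auto simp: cinner_add_left cinner_scaleR_left scaleR_conv_of_real cauchy_schwarz)

lemma bl_cinner_right: "bounded_linear (\<lambda>y::'a::complex_inner. cinner x y)"
proof (rule bounded_linear_intro[where K="norm x"])
  show "norm (cinner x y) \<le> norm y * norm x" for y
    using cauchy_schwarz[of x y] by (simp add: mult.commute)
qed (auto simp: cinner_add_right cinner_scaleR_right scaleR_conv_of_real)

lemma bb_cinner: "bounded_bilinear (cinner :: 'a::complex_inner \<Rightarrow> 'a \<Rightarrow> complex)"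
proof
  show "\<exists>K. \<forall>a b::'a. norm (cinner a b) \<le> norm a * norm b * K"
    by (rule exI[of _ 1]) (simp add: cauchy_schwarz)
qed (auto simp: cinner_add_left cinner_add_right cinner_scaleR_left cinner_scaleR_right scaleR_conv_of_real)

lemma bl_scaleC: "bounded_linear (\<lambda>x::'a::complex_inner. scaleC c x)"
  by (rule bounded_linear_intro[where K="cmod c"])
     (auto simp: scaleC_add_right scaleR_scaleC scaleC_scaleC mult.commute norm_scaleC)

lemma cinner_ext: fixes u v :: "'a::complex_inner"
  assumes "\<And>x. cinner x u = cinner x v" shows "u = v"
proof -
  have "cinner (u - v) (u - v) = 0"
    using assms[of "u - v"] by (simp add: cinner_diff_right)
  then show ?thesis by (simp add: cinner_eq_zero_iff)
qed

lemma bcl_linear: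
  assumes "bounded_clinear A"
  shows "A (x + y) = A x + A y" "A (x - y) = A x - A y" "A 0 = 0" "A (- x) = - A x"
    "A (scaleC c x) = scaleC c (A x)" "A (scaleR r x) = scaleR r (A x)"
    "A (sum f F) = (\<Sum>i\<in>F. A (f i))"
  using assms unfolding bounded_clinear_def
  by (auto simp: linear_simps bounded_linear.linear linear_sum[of A] o_def)

lemma bcl_bl: "bounded_clinear A \<Longrightarrow> bounded_linear A"
  by (simp add: bounded_clinear_def)

lemma bcl_bound: "bounded_clinear A \<Longrightarrow> \<exists>K>0. \<forall>x. norm (A x) \<le> norm x * K"
  unfolding bounded_clinear_def using bounded_linear.pos_bounded by blast

lemma bcl_diff: "bounded_clinear A \<Longrightarrow> bounded_clinear B \<Longrightarrow> bounded_clinear (\<lambda>h. A h - B h)"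
  unfolding bounded_clinear_def by (auto intro: bounded_linear_sub simp: scaleC_diff_right)

lemma bcl_add: "bounded_clinear A \<Longrightarrow> bounded_clinear B \<Longrightarrow> bounded_clinear (\<lambda>h. A h + B h)"
  unfolding bounded_clinear_def by (auto intro: bounded_linear_add simp: scaleC_add_right)

lemma bcl_comp: "bounded_clinear A \<Longrightarrow> bounded_clinear B \<Longrightarrow> bounded_clinear (\<lambda>h. A (B h))"
  unfolding bounded_clinear_def using bounded_linear_compose[of A B] by (auto simp: o_def)

lemma pos_herm:
  fixes X :: "'a::complex_inner \<Rightarrow> 'a"
  assumes "positive_op X"
  shows "cinner (X u) v = cnj (cinner (X v) u)"
proof -
  have bcl: "bounded_clinear X" using assms by (simp add: positive_op_def)
  have im: "\<And>h. Im (cinner (X h) h) = 0" using assms by (simp add: positive_op_def)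
  let ?a = "cinner (X u) v" and ?b = "cinner (X v) u"
  have "cinner (X (u + v)) (u + v) = cinner (X u) u + cinner (X v) v + ?a + ?b"
    by (simp add: bcl_linear[OF bcl] cinner_add_left cinner_add_right)
  then have 1: "Im ?a + Im ?b = 0" using im[of "u+v"] im[of u] im[of v] by simp
  have "cinner (X (u + scaleC \<i> v)) (u + scaleC \<i> v) =
     cinner (X u) u + cinner (X v) v - \<i> * ?a + \<i> * ?b"
    by (simp add: bcl_linear[OF bcl] cinner_add_left cinner_add_right cinner_scaleC_left cinner_scaleC_right algebra_simps)
  then have 2: "Re ?b - Re ?a = 0" using im[of "u + scaleC \<i> v"] im[of u] im[of v] by simp
  from 1 2 show ?thesis by (simp add: complex_eq_iff)
qed

lemma pos_Q_real: "positive_op X \<Longrightarrow> cinner (X h) h = complex_of_real (Re (cinner (X h) h))"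
  by (simp add: positive_op_def complex_eq_iff)

lemma pos_Q_nonneg: "positive_op X \<Longrightarrow> 0 \<le> Re (cinner (X h) h)"
  by (simp add: positive_op_def)

lemma pos_CS:
  fixes X :: "'a::complex_inner \<Rightarrow> 'a"
  assumes pos: "positive_op X"
  shows "((norm (X h))^2)^2 \<le> Re (cinner (X h) h) * Re (cinner (X (X h)) (X h))"
proof -
  have bcl: "bounded_clinear X" using pos by (simp add: positive_op_def)
  let ?q = "Re (cinner (X h) h)" and ?n = "(norm (X h))^2" and ?r = "Re (cinner (X (X h)) (X h))"
  have "\<And>t::real. 0 \<le> ?q - 2 * ?n * t + ?r * t^2"
  proof -
    fix t :: real
    have herm: "cinner (X (X h)) h = cnj (cinner (X h) (X h))"
      using pos_herm[OF pos, of "X h" h] by simp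
    have "cinner (X (h - scaleR t (X h))) (h - scaleR t (X h)) =
      cinner (X h) h - of_real t * cinner (X h) (X h) - of_real t * cinner (X (X h)) h
       + of_real t * of_real t * cinner (X (X h)) (X h)"
      by (simp add: bcl_linear[OF bcl] cinner_diff_left cinner_diff_right cinner_scaleR_left cinner_scaleR_right algebra_simps)
    also have "\<dots> = cinner (X h) h - of_real (2 * t * ?n) + of_real (t^2) * cinner (X (X h)) (X h)"
      unfolding herm cinner_self_eq by (simp add: power2_eq_square algebra_simps)
    finally have eq: "cinner (X (h - scaleR t (X h))) (h - scaleR t (X h)) = cinner (X h) h - of_real (2 * t * ?n) + of_real (t^2) * cinner (X (X h)) (X h)" .
    have "Re (cinner (X (h - scaleR t (X h))) (h - scaleR t (X h))) = Re (cinner (X h) h - of_real (2 * t * ?n) + of_real (t^2) * cinner (X (X h)) (X h))"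
      by (rule arg_cong[OF eq])
    also have "\<dots> = ?q - 2 * ?n * t + ?r * t^2" by (simp only: minus_complex.sel plus_complex.sel Re_complex_of_real Im_complex_of_real) (simp add: algebra_simps)
    finally have "Re (cinner (X (h - scaleR t (X h))) (h - scaleR t (X h))) = ?q - 2 * ?n * t + ?r * t^2" .
    then show "0 \<le> ?q - 2 * ?n * t + ?r * t^2" using pos_Q_nonneg[OF pos] by metis
  qed
  from quad_ineq[OF this pos_Q_nonneg[OF pos]] show ?thesis .
qed

lemma pos_Q_zero:
  fixes X :: "'a::complex_inner \<Rightarrow> 'a"
  assumes "positive_op X" "Re (cinner (X h) h) = 0"
  shows "X h = 0"
  using pos_CS[OF assms(1), of h] assms(2) by simp

lemma pos_bound:
  fixes X :: "'a::complex_inner \<Rightarrow> 'a"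
  assumes pos: "positive_op X" and K: "\<And>g. Re (cinner (X g) g) \<le> K * (norm g)^2"
  shows "(norm (X h))^2 \<le> K * Re (cinner (X h) h)"
proof -
  have "((norm (X h))^2)^2 \<le> Re (cinner (X h) h) * (K * (norm (X h))^2)"
    using pos_CS[OF pos, of h] K[of "X h"] pos_Q_nonneg[OF pos, of h]
    by (meson mult_left_mono order_trans)
  then have "(norm (X h))^2 * (norm (X h))^2 \<le> (norm (X h))^2 * (K * Re (cinner (X h) h))"
    by (simp add: power2_eq_square mult_ac)
  then show ?thesis
  proof (cases "X h = 0")
    case False
    then have "(norm (X h))^2 > 0" by simp
    with mult_left_le_imp_le[OF \<open>(norm (X h))^2 * (norm (X h))^2 \<le> (norm (X h))^2 * (K * Re (cinner (X h) h))\<close>]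
    show ?thesis by blast
  qed (simp add: pos_Q_nonneg[OF pos] K[of 0] | metis K norm_zero power2_eq_square mult_zero_left mult_zero_right order_trans)+
qed


lemma csubspace_scaleR: "csubspace S \<Longrightarrow> x \<in> S \<Longrightarrow> scaleR r x \<in> S"
  by (simp add: csubspace_def scaleR_scaleC)

lemma csubspace_diff: "csubspace S \<Longrightarrow> x \<in> S \<Longrightarrow> y \<in> S \<Longrightarrow> x - y \<in> S"
proof -
  assume S: "csubspace S" "x \<in> S" "y \<in> S"
  then have "scaleC (-1) y \<in> S" by (simp add: csubspace_def)
  moreover have "scaleC (-1) y = - y" by (simp add: scaleC_minus_left scaleC_one)
  ultimately show ?thesis using S by (metis csubspace_def diff_conv_add_uminus)
qed

lemma parallelogram:
  fixes u v :: "'a::complex_inner"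
  shows "(norm (u + v))^2 + (norm (u - v))^2 = 2 * (norm u)^2 + 2 * (norm v)^2"
  by (simp add: norm_add_sq norm_diff_sq)

lemma proj_orth:
  fixes M :: "'a::chilbert set"
  assumes M: "closed_csubspace M" and MU: "M \<noteq> UNIV"
  shows "\<exists>w. w \<noteq> 0 \<and> (\<forall>m\<in>M. cinner m w = 0)"
proof -
  have cs: "csubspace M" and cl: "closed M" using M by (auto simp: closed_csubspace_def)
  have M0: "0 \<in> M" using cs by (simp add: csubspace_def)
  obtain x where x: "x \<notin> M" using MU by blast
  define d where "d = infdist x M"
  have d0: "d \<ge> 0" by (simp add: d_def infdist_nonneg)
  have dle: "d \<le> norm (x - m)" if "m \<in> M" for m
    using infdist_le[OF that, of x] by (simp add: d_def dist_norm)
  have "\<exists>m\<in>M. norm (x - m) < d + 1 / (real n + 1)" for n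
  proof -
    have "M \<noteq> {}" using M0 by blast
    then have "(INF a\<in>M. dist x a) = d" by (simp add: d_def infdist_notempty)
    then have "(INF a\<in>M. dist x a) < d + 1 / (real n + 1)" by simp
    then show ?thesis
      using M0 bdd_below_image_dist[of x M] by (subst (asm) cINF_less_iff) (auto simp: dist_norm)
  qed
  then obtain ms where ms: "\<And>n. ms n \<in> M" "\<And>n. norm (x - ms n) < d + 1 / (real n + 1)"
    by metis
  have key: "(norm (ms a - ms b))^2 \<le> (8 * d + 4) / (real N + 1)" if "N \<le> a" "N \<le> b" for N a b
  proof -
    define ea where "ea = 1 / (real a + 1)"
    define eb where "eb = 1 / (real b + 1)"
    define eN where "eN = 1 / (real N + 1)"
    have ea: "0 \<le> ea" "ea \<le> eN" "ea \<le> 1" using that by (auto simp: ea_def eN_def frac_le)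
    have eb: "0 \<le> eb" "eb \<le> eN" "eb \<le> 1" using that by (auto simp: eb_def eN_def frac_le)
    have mid: "scaleR (1/2) (ms a + ms b) \<in> M"
      using ms(1) cs by (metis csubspace_def csubspace_scaleR)
    have "(x - ms a) + (x - ms b) = scaleR 2 (x - scaleR (1/2) (ms a + ms b))"
      by (simp add: algebra_simps scaleR_2)
    then have "norm ((x - ms a) + (x - ms b)) = 2 * norm (x - scaleR (1/2) (ms a + ms b))"
      by simp
    then have h1: "(norm ((x - ms a) + (x - ms b)))^2 \<ge> 4 * d^2"
      using dle[OF mid] d0 by (simp add: power_mult_distrib power_mono)
    have h2: "(norm (x - ms a))^2 \<le> (d + ea)^2"
      using ms(2)[of a] by (intro power_mono) (auto simp: ea_def)
    have h3: "(norm (x - ms b))^2 \<le> (d + eb)^2"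
      using ms(2)[of b] by (intro power_mono) (auto simp: eb_def)
    have "(norm (ms a - ms b))^2 = (norm ((x - ms b) - (x - ms a)))^2"
      by (simp add: algebra_simps)
    also have "\<dots> = 2 * (norm (x - ms a))^2 + 2 * (norm (x - ms b))^2 - (norm ((x - ms a) + (x - ms b)))^2"
      using parallelogram[of "x - ms b" "x - ms a"] by (simp add: add.commute)
    also have "\<dots> \<le> 2 * (d + ea)^2 + 2 * (d + eb)^2 - 4 * d^2"
      using h1 h2 h3 by linarith
    also have "\<dots> = 4 * d * ea + 2 * ea * ea + 4 * d * eb + 2 * eb * eb"
      by (simp add: power2_eq_square algebra_simps)
    also have "\<dots> \<le> 4 * d * eN + 2 * eN + 4 * d * eN + 2 * eN"
      using ea eb d0 by (intro add_mono mult_left_mono mult_mono) auto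
    also have "\<dots> = (8 * d + 4) * eN" by (simp add: algebra_simps)
    also have "\<dots> = (8 * d + 4) / (real N + 1)" by (simp add: eN_def)
    finally show ?thesis .
  qed
  have "Cauchy ms"
  proof (rule metric_CauchyI)
    fix e :: real assume e: "e > 0"
    obtain N :: nat where N: "(8 * d + 4) / e^2 < real N" using reals_Archimedean2 by blast
    have "(8 * d + 4) / (real N + 1) < e^2"
      using N e d0 by (simp add: field_simps) (smt (verit) zero_less_power)
    then have "\<forall>a\<ge>N. \<forall>b\<ge>N. dist (ms a) (ms b) < e"
    proof (intro allI impI)
      fix a b assume ab: "N \<le> a" "N \<le> b"
      assume "(8 * d + 4) / (real N + 1) < e^2"
      with key[OF ab] have "(norm (ms a - ms b))^2 < e^2" by linarith
      then show "dist (ms a) (ms b) < e" using e by (simp add: dist_norm power_less_imp_less_base)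
    qed
    then show "\<exists>N. \<forall>a\<ge>N. \<forall>b\<ge>N. dist (ms a) (ms b) < e" by blast
  qed
  then obtain m where m: "ms \<longlonglongrightarrow> m" using Cauchy_convergent_iff convergent_def by blast
  have mM: "m \<in> M" using cl m ms(1) closed_sequentially by blast
  have "norm (x - m) \<le> d"
  proof (rule tendsto_le[OF sequentially_bot])
    show "(\<lambda>n. d + 1 / (real n + 1)) \<longlonglongrightarrow> d"
      using tendsto_add[OF tendsto_const LIMSEQ_inverse_real_of_nat] by (simp add: inverse_eq_divide add.commute)
    show "(\<lambda>n. norm (x - ms n)) \<longlonglongrightarrow> norm (x - m)"
      by (intro tendsto_intros m)
    show "\<forall>\<^sub>F n in sequentially. norm (x - ms n) \<le> d + 1 / (real n + 1)"
      using ms(2) by (simp add: less_imp_le)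
  qed
  define w where "w = x - m"
  have w0: "w \<noteq> 0" using x mM by (auto simp: w_def)
  have wmin: "norm w \<le> norm (w - v)" if "v \<in> M" for v
  proof -
    have "m + v \<in> M" using mM that cs by (simp add: csubspace_def)
    then have "d \<le> norm (x - (m + v))" by (rule dle)
    then show ?thesis using \<open>norm (x - m) \<le> d\<close> by (simp add: w_def algebra_simps)
  qed
  have "cinner m' w = 0" if "m' \<in> M" for m'
  proof -
    let ?c = "cinner w m'"
    have "\<And>t::real. 0 \<le> 0 - 2 * ((cmod ?c)^2) * t + ((cmod ?c)^2 * (norm m')^2) * t^2"
    proof -
      fix t :: real
      have "scaleC (of_real t * ?c) m' \<in> M" using cs that by (simp add: csubspace_def)
      then have "(norm w)^2 \<le> (norm (w - scaleC (of_real t * ?c) m'))^2"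
        using wmin by (simp add: power_mono)
      then show "0 \<le> 0 - 2 * ((cmod ?c)^2) * t + ((cmod ?c)^2 * (norm m')^2) * t^2"
        unfolding norm_diff_t_sq by simp
    qed
    from quad_ineq[OF this] have "?c = 0" by simp
    then show ?thesis by (metis cinner_commute complex_cnj_zero)
  qed
  with w0 show ?thesis by blast
qed

lemma riesz:
  fixes f :: "'a::chilbert \<Rightarrow> complex"
  assumes bl: "bounded_linear f" and hom: "\<And>c x. f (scaleC c x) = c * f x"
  shows "\<exists>z. \<forall>x. f x = cinner x z"
proof (cases "\<forall>x. f x = 0")
  case True
  then show ?thesis by (intro exI[of _ 0]) simp
next
  case False
  interpret bounded_linear f by (rule bl)
  let ?N = "{x. f x = 0}"
  have "closed ?N"
    by (intro closed_Collect_eq continuous_on_const continuous_on continuous_on_id)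
  moreover have "csubspace ?N" by (auto simp: csubspace_def add hom)
  ultimately have "closed_csubspace ?N" by (simp add: closed_csubspace_def)
  moreover have "?N \<noteq> UNIV" using False by auto
  ultimately obtain w where w: "w \<noteq> 0" "\<And>n. f n = 0 \<Longrightarrow> cinner n w = 0"
    using proj_orth by blast
  have ww: "cinner w w \<noteq> 0" using w(1) by (simp add: cinner_eq_zero_iff)
  have fw: "f w \<noteq> 0" using w ww by blast
  show ?thesis
  proof (intro exI allI)
    fix x
    let ?s = "f x / f w"
    have "f (x - scaleC ?s w) = 0" using fw by (simp add: diff hom)
    then have "cinner (x - scaleC ?s w) w = 0" by (rule w(2))
    then have "cinner x w = ?s * cinner w w" by (simp add: cinner_diff_left cinner_scaleC_left)
    then have "f x = cinner x w * f w / cinner w w" using fw ww by (simp add: field_simps)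
    also have "\<dots> = cinner x (scaleC (cnj (f w / cinner w w)) w)"
      by (simp add: cinner_scaleC_right)
    finally show "f x = cinner x (scaleC (cnj (f w / cinner w w)) w)" .
  qed
qed

lemma adj_prop:
  fixes A :: "'a::chilbert \<Rightarrow> 'a"
  assumes A: "bounded_clinear A"
  shows "cinner (A x) y = cinner x (adj A y)"
proof -
  have "\<exists>z. \<forall>x. cinner (A x) y = cinner x z" for y
  proof (rule riesz)
    show "bounded_linear (\<lambda>x. cinner (A x) y)"
      using bounded_linear_compose[OF bl_cinner_left bcl_bl[OF A]] .
    show "cinner (A (scaleC c x)) y = c * cinner (A x) y" for c x
      by (simp add: bcl_linear[OF A] cinner_scaleC_left)
  qed
  then obtain B where B: "\<And>x y. cinner (A x) y = cinner x (B y)" by metis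
  have "\<forall>x y. cinner (A x) y = cinner x (adj A y)"
    unfolding adj_def
  proof (rule theI[where a=B])
    show "\<forall>x y. cinner (A x) y = cinner x (B y)" using B by blast
    fix B' assume "\<forall>x y. cinner (A x) y = cinner x (B' y)"
    then show "B' = B" using B by (intro ext cinner_ext) metis
  qed
  then show ?thesis by blast
qed

lemma adj_bl:
  fixes A :: "'a::chilbert \<Rightarrow> 'a"
  assumes A: "bounded_clinear A"
  shows "bounded_linear (adj A)"
proof -
  obtain K where K: "K > 0" "\<And>x. norm (A x) \<le> norm x * K" using bcl_bound[OF A] by blast
  show ?thesis
  proof (rule bounded_linear_intro[where K=K])
    show "adj A (x + y) = adj A x + adj A y" for x y
      by (rule cinner_ext) (simp add: adj_prop[OF A, symmetric] cinner_add_right)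
    show "adj A (scaleR r x) = scaleR r (adj A x)" for r x
      by (rule cinner_ext) (simp add: adj_prop[OF A, symmetric] cinner_scaleR_right)
    show "norm (adj A x) \<le> norm x * K" for x
    proof -
      have "(norm (adj A x))^2 = Re (cinner (A (adj A x)) x)"
        by (simp add: adj_prop[OF A] norm_sq_cinner)
      also have "\<dots> \<le> cmod (cinner (A (adj A x)) x)" by (rule complex_Re_le_cmod)
      also have "\<dots> \<le> norm (A (adj A x)) * norm x" by (rule cauchy_schwarz)
      also have "\<dots> \<le> norm (adj A x) * K * norm x" by (intro mult_right_mono K) simp
      finally have "norm (adj A x) * norm (adj A x) \<le> norm (adj A x) * (norm x * K)"
        by (simp add: power2_eq_square mult_ac)
      then show ?thesis
        using K(1) by (cases "adj A x = 0") (auto intro: mult_left_le_imp_le simp: less_le)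
    qed
  qed
qed


lemma has_sum_tail:
  fixes f :: "'i \<Rightarrow> 'b::real_normed_vector"
  assumes "(f has_sum s) I" "e > 0"
  shows "\<exists>F0. finite F0 \<and> F0 \<subseteq> I \<and> (\<forall>F. finite F \<and> F \<subseteq> I - F0 \<longrightarrow> norm (sum f F) < e)"
proof -
  have "(sum f \<longlongrightarrow> s) (finite_subsets_at_top I)" using assms(1) by (simp add: has_sum_def)
  then have ev: "\<forall>e>0. eventually (\<lambda>G. dist (sum f G) s < e) (finite_subsets_at_top I)"
    by (simp add: tendsto_iff)
  have e2: "e/2 > 0" using assms(2) by simp
  have "eventually (\<lambda>G. dist (sum f G) s < e/2) (finite_subsets_at_top I)"
    using ev[rule_format, OF e2] .
  then have "\<exists>X. finite X \<and> X \<subseteq> I \<and> (\<forall>Y. finite Y \<and> X \<subseteq> Y \<and> Y \<subseteq> I \<longrightarrow> dist (sum f Y) s < e/2)"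
    by (simp only: eventually_finite_subsets_at_top)
  then obtain F0 where F0: "finite F0" "F0 \<subseteq> I"
    "\<forall>G. finite G \<and> F0 \<subseteq> G \<and> G \<subseteq> I \<longrightarrow> dist (sum f G) s < e/2"
    by (elim exE conjE) (rule that)
  have "norm (sum f F) < e" if F: "finite F" "F \<subseteq> I - F0" for F
  proof -
    have disj: "F \<inter> F0 = {}" using F by blast
    have "sum f (F \<union> F0) = sum f F + sum f F0"
      by (rule sum.union_disjoint[OF F(1) F0(1) disj])
    then have "sum f F = (sum f (F \<union> F0) - s) - (sum f F0 - s)" by (simp add: algebra_simps)
    then have "norm (sum f F) = norm ((sum f (F \<union> F0) - s) - (sum f F0 - s))" by simp
    also have "\<dots> \<le> norm (sum f (F \<union> F0) - s) + norm (sum f F0 - s)"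
      by (rule norm_triangle_ineq4)
    also have "\<dots> < e/2 + e/2"
    proof (rule add_strict_mono)
      have "finite (F \<union> F0)" "F0 \<subseteq> F \<union> F0" "F \<union> F0 \<subseteq> I" using F F0(1,2) by auto
      then have "dist (sum f (F \<union> F0)) s < e/2" using F0(3) by blast
      then show "norm (sum f (F \<union> F0) - s) < e/2" by (simp add: dist_norm)
      have "dist (sum f F0) s < e/2" using F0 by blast
      then show "norm (sum f F0 - s) < e/2" by (simp add: dist_norm)
    qed
    finally show ?thesis by simp
  qed
  with F0 show ?thesis by blast
qed

lemma summable_on_Cauchy_norm:
  fixes f :: "'i \<Rightarrow> 'b::{real_normed_vector, complete_space}"
  assumes C: "\<And>e. e > 0 \<Longrightarrow> \<exists>F0. finite F0 \<and> F0 \<subseteq> I \<and> (\<forall>F. finite F \<and> F \<subseteq> I - F0 \<longrightarrow> norm (sum f F) < e)"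
  shows "f summable_on I"
proof -
  let ?Fl = "filtermap (sum f) (finite_subsets_at_top I)"
  have "cauchy_filter ?Fl"
    unfolding cauchy_filter_iff
  proof (intro allI impI)
    fix P :: "'b \<times> 'b \<Rightarrow> bool"
    assume "eventually P uniformity"
    then obtain e where e: "e > 0" "\<And>x y. dist x y < e \<Longrightarrow> P (x, y)"
      unfolding eventually_uniformity_metric by blast
    obtain F0 where F0: "finite F0" "F0 \<subseteq> I" "\<And>F. finite F \<Longrightarrow> F \<subseteq> I - F0 \<Longrightarrow> norm (sum f F) < e/2"
      using C[of "e/2"] e(1) by auto
    let ?X = "sum f ` {G. finite G \<and> F0 \<subseteq> G \<and> G \<subseteq> I}"
    have "eventually (\<lambda>x. x \<in> ?X) ?Fl"
      unfolding eventually_filtermap eventually_finite_subsets_at_top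
      using F0 by blast
    moreover have "\<forall>z\<in>?X \<times> ?X. P z"
    proof
      fix z assume "z \<in> ?X \<times> ?X"
      then obtain G1 G2 where G: "z = (sum f G1, sum f G2)" "finite G1" "F0 \<subseteq> G1" "G1 \<subseteq> I"
        "finite G2" "F0 \<subseteq> G2" "G2 \<subseteq> I" by auto
      have s1: "sum f G1 = sum f (G1 - F0) + sum f F0" using G by (metis sum.subset_diff F0(1))
      have s2: "sum f G2 = sum f (G2 - F0) + sum f F0" using G by (metis sum.subset_diff F0(1))
      have "dist (sum f G1) (sum f G2) = norm (sum f (G1 - F0) - sum f (G2 - F0))"
        by (simp add: dist_norm s1 s2)
      also have "\<dots> \<le> norm (sum f (G1 - F0)) + norm (sum f (G2 - F0))" by (rule norm_triangle_ineq4)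
      also have "\<dots> < e/2 + e/2" using G F0 by (intro add_strict_mono F0(3)) auto
      finally show "P z" using e(2) G(1) by simp
    qed
    ultimately show "\<exists>X. eventually (\<lambda>x. x \<in> X) ?Fl \<and> (\<forall>z\<in>X \<times> X. P z)" by blast
  qed
  then have "convergent_filter ?Fl" by (rule cauchy_filter_convergent)
  then obtain s where "?Fl \<le> nhds s" by (auto simp: convergent_filter_iff)
  then have "(f has_sum s) I" by (simp add: has_sum_def filterlim_def)
  then show ?thesis unfolding summable_on_def by blast
qed

lemma has_sum_norm_le:
  fixes f :: "'i \<Rightarrow> 'b::real_normed_vector"
  assumes "(f has_sum s) I" "\<And>F. finite F \<Longrightarrow> F \<subseteq> I \<Longrightarrow> norm (sum f F) \<le> B"
  shows "norm s \<le> B"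
proof (rule tendsto_upperbound)
  show "((\<lambda>F. norm (sum f F)) \<longlongrightarrow> norm s) (finite_subsets_at_top I)"
    using assms(1) by (intro tendsto_norm) (simp add: has_sum_def)
  show "eventually (\<lambda>F. norm (sum f F) \<le> B) (finite_subsets_at_top I)"
    using assms(2) by (intro eventually_finite_subsets_at_top_weakI) 
qed (simp add: finite_subsets_at_top_neq_bot)


locale setting =
  fixes A :: "nat \<Rightarrow> 'a::chilbert \<Rightarrow> 'a" and I :: "nat set"
  assumes bnd: "\<forall>i\<in>I. bounded_clinear (A i)"
    and normal: "\<forall>h. (\<lambda>i. A i (adj (A i) h)) summable_on I"
begin

lemma bcl: "i \<in> I \<Longrightarrow> bounded_clinear (A i)" using bnd by blast

lemma adjA: "i \<in> I \<Longrightarrow> cinner (A i x) y = cinner x (adj (A i) y)"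
  by (rule adj_prop[OF bcl])

lemma adj_blin: "i \<in> I \<Longrightarrow> bounded_linear (adj (A i))"
  by (rule adj_bl[OF bcl])

lemma adj_scaleC: "i \<in> I \<Longrightarrow> adj (A i) (scaleC c y) = scaleC c (adj (A i) y)"
  by (rule cinner_ext) (simp add: adjA[symmetric] cinner_scaleC_right)

lemma adj_add: "i \<in> I \<Longrightarrow> adj (A i) (x + y) = adj (A i) x + adj (A i) y"
  using adj_blin by (simp add: linear_simps bounded_linear.linear)

lemma adj_diff: "i \<in> I \<Longrightarrow> adj (A i) (x - y) = adj (A i) x - adj (A i) y"
  using adj_blin by (simp add: linear_simps bounded_linear.linear)

lemma adj_scaleR: "i \<in> I \<Longrightarrow> adj (A i) (scaleR r y) = scaleR r (adj (A i) y)"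
  using adj_blin by (simp add: linear_simps bounded_linear.linear)

definition Phi :: "'a \<Rightarrow> 'a" where "Phi g = infsum (\<lambda>i. A i (adj (A i) g)) I"

definition p :: "nat set \<Rightarrow> 'a \<Rightarrow> real" where "p F g = (\<Sum>i\<in>F. (norm (adj (A i) g))^2)"

lemma bl_Re_inner: "bounded_linear (\<lambda>v. Re (cinner v (g::'a)))"
  using bounded_linear_compose[OF bounded_linear_Re bl_cinner_left[of g]] by (simp add: o_def)

lemma bl_Im_inner: "bounded_linear (\<lambda>v. Im (cinner v (g::'a)))"
  using bounded_linear_compose[OF bounded_linear_Im bl_cinner_left[of g]] by (simp add: o_def)

lemma Phi_has: "((\<lambda>i. (norm (adj (A i) g))^2) has_sum Re (cinner (Phi g) g)) I"
proof -
  have "((\<lambda>i. A i (adj (A i) g)) has_sum Phi g) I"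
    unfolding Phi_def using normal by simp
  from has_sum_bounded_linear[OF bl_Re_inner this]
  have "((\<lambda>i. Re (cinner (A i (adj (A i) g)) g)) has_sum Re (cinner (Phi g) g)) I" .
  moreover have "Re (cinner (A i (adj (A i) g)) g) = (norm (adj (A i) g))^2" if "i \<in> I" for i
    using adjA[OF that, of "adj (A i) g" g] by (simp add: norm_sq_cinner)
  ultimately show ?thesis using has_sum_cong by (metis (no_types, lifting))
qed

lemma p_le: "finite F \<Longrightarrow> F \<subseteq> I \<Longrightarrow> p F g \<le> Re (cinner (Phi g) g)"
  unfolding p_def by (rule finite_sum_le_has_sum[OF Phi_has]) auto

lemma p_nonneg: "0 \<le> p F g" unfolding p_def by (simp add: sum_nonneg)

lemma p_scaleR: "F \<subseteq> I \<Longrightarrow> p F (scaleR c g) = c^2 * p F g"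
  unfolding p_def sum_distrib_left
  by (intro sum.cong refl) (auto simp: adj_scaleR power_mult_distrib)

lemma sq_diff_le: "(norm (a - b :: 'a))^2 \<le> 2 * (norm a)^2 + 2 * (norm b)^2"
proof -
  have "norm (a - b) \<le> norm a + norm b" by (rule norm_triangle_ineq4)
  then have "(norm (a - b))^2 \<le> (norm a + norm b)^2" by (simp add: power_mono)
  also have "\<dots> \<le> 2 * (norm a)^2 + 2 * (norm b)^2"
    using sum_squares_bound[of "norm a" "norm b"] by (simp add: power2_eq_square algebra_simps)
  finally show ?thesis .
qed

lemma p_diff: "F \<subseteq> I \<Longrightarrow> p F (a - b) \<le> 2 * p F a + 2 * p F b"
  unfolding p_def sum_distrib_left sum.distrib[symmetric]
  by (intro sum_mono) (auto simp: adj_diff sq_diff_le)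

lemma p_cont: "F \<subseteq> I \<Longrightarrow> continuous_on UNIV (p F)"
  unfolding p_def
  by (intro continuous_on_sum continuous_on_power continuous_on_norm
      linear_continuous_on adj_blin) auto

lemma UB: "\<exists>C>0. \<forall>F g. finite F \<longrightarrow> F \<subseteq> I \<longrightarrow> p F g \<le> C * (norm g)^2"
proof -
  define E where "E n = {g. \<forall>F. finite F \<and> F \<subseteq> I \<longrightarrow> p F g \<le> real n}" for n :: nat
  have E_eq: "E n = (\<Inter>F\<in>{F. finite F \<and> F \<subseteq> I}. {g. p F g \<le> real n})" for n
    by (auto simp: E_def)
  have clE: "closed (E n)" for n
    unfolding E_eq
    by (intro closed_INT ballI closed_Collect_le continuous_on_const) (auto intro: p_cont)
  have covE: "(\<Union>n. E n) = UNIV"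
  proof -
    have "g \<in> E (nat \<lceil>Re (cinner (Phi g) g)\<rceil>)" for g
      unfolding E_def using p_le
      by (auto intro: order_trans[OF _ real_nat_ceiling_ge])
    then show ?thesis by blast
  qed
  have "\<exists>n. interior (E n) \<noteq> {}"
  proof (rule ccontr)
    assume "\<not> ?thesis"
    then have "\<And>T. T \<in> range E \<Longrightarrow> closedin euclidean T \<and> euclidean interior_of T = {}"
      using clE closed_closedin by auto
    then have "euclidean interior_of \<Union>(range E) = {}"
      by (intro Baire_category_alt) (auto simp: completely_metrizable_space_euclidean)
    then show False using covE by simp
  qed
  then obtain n g0 where g0: "g0 \<in> interior (E n)" by blast
  then obtain r where r: "r > 0" "ball g0 r \<subseteq> E n"
    by (meson interior_subset open_contains_ball open_interior subset_trans)
  have small: "p F u \<le> 4 * real n" if u: "norm u < r" and F: "finite F" "F \<subseteq> I" for F u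
  proof -
    have "g0 + u \<in> E n" "g0 \<in> E n" using r u by (auto simp: dist_norm)
    then have "p F (g0 + u) \<le> real n" "p F g0 \<le> real n" using F by (auto simp: E_def)
    moreover have "p F u \<le> 2 * p F (g0 + u) + 2 * p F g0"
      using p_diff[OF F(2), of "g0 + u" g0] by simp
    ultimately show ?thesis by linarith
  qed
  define C where "C = 16 * (real n + 1) / r^2"
  have C0: "C > 0" using r by (simp add: C_def)
  have "p F g \<le> C * (norm g)^2" if F: "finite F" "F \<subseteq> I" for F g
  proof (cases "g = 0")
    case True
    then show ?thesis using p_scaleR[OF F(2), of 0 0] by simp
  next
    case False
    define c where "c = r / (2 * norm g)"
    have c0: "c > 0" using False r by (simp add: c_def)
    have "norm (scaleR c g) = r / 2" using False r by (simp add: c_def)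
    then have "p F (scaleR c g) \<le> 4 * real n" using r by (intro small F) auto
    then have "c^2 * p F g \<le> 4 * real n" by (simp add: p_scaleR[OF F(2)])
    then have "p F g \<le> 4 * real n / c^2" using c0 by (simp add: field_simps)
    also have "\<dots> = 16 * real n / r^2 * (norm g)^2"
      using False r by (simp add: c_def field_simps power2_eq_square)
    also have "\<dots> \<le> C * (norm g)^2"
      unfolding C_def using r by (intro mult_right_mono divide_right_mono) auto
    finally show ?thesis .
  qed
  with C0 show ?thesis by blast
qed

end

context setting begin

definition Cb :: real where "Cb = (SOME C. C > 0 \<and> (\<forall>F g. finite F \<longrightarrow> F \<subseteq> I \<longrightarrow> p F g \<le> C * (norm g)^2))"

lemma Cb: "Cb > 0" "finite F \<Longrightarrow> F \<subseteq> I \<Longrightarrow> p F g \<le> Cb * (norm g)^2"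
proof -
  have "Cb > 0 \<and> (\<forall>F g. finite F \<longrightarrow> F \<subseteq> I \<longrightarrow> p F g \<le> Cb * (norm g)^2)"
    unfolding Cb_def using UB by (rule someI_ex)
  then show "Cb > 0" "finite F \<Longrightarrow> F \<subseteq> I \<Longrightarrow> p F g \<le> Cb * (norm g)^2" by auto
qed

lemma L2_p: "L2_set (\<lambda>i. norm (adj (A i) h)) F = sqrt (p F h)"
  by (simp add: L2_set_def p_def)

lemma inner_bound:
  assumes Y: "\<And>v. norm (Y v) \<le> norm v * K" "K \<ge> 0"
    and F: "finite F" "F \<subseteq> I"
  shows "Re (cinner (\<Sum>i\<in>F. A i (Y (adj (A i) h))) v) \<le> K * (sqrt (p F h) * sqrt (p F v))"
proof -
  have "cinner (\<Sum>i\<in>F. A i (Y (adj (A i) h))) v = (\<Sum>i\<in>F. cinner (A i (Y (adj (A i) h))) v)"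
    by (rule cinner_sum_left)
  also have "\<dots> = (\<Sum>i\<in>F. cinner (Y (adj (A i) h)) (adj (A i) v))"
  proof (rule sum.cong[OF refl])
    fix i assume "i \<in> F"
    then have "i \<in> I" using F by blast
    then show "cinner (A i (Y (adj (A i) h))) v = cinner (Y (adj (A i) h)) (adj (A i) v)"
      by (rule adjA)
  qed
  finally have "Re (cinner (\<Sum>i\<in>F. A i (Y (adj (A i) h))) v) = Re (\<Sum>i\<in>F. cinner (Y (adj (A i) h)) (adj (A i) v))"
    by (rule arg_cong)
  also have "\<dots> = (\<Sum>i\<in>F. Re (cinner (Y (adj (A i) h)) (adj (A i) v)))" by (rule Re_sum)
  also have "\<dots> \<le> (\<Sum>i\<in>F. norm (Y (adj (A i) h)) * norm (adj (A i) v))"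
    by (intro sum_mono order_trans[OF complex_Re_le_cmod cauchy_schwarz])
  also have "\<dots> \<le> (\<Sum>i\<in>F. K * (\<bar>norm (adj (A i) h)\<bar> * \<bar>norm (adj (A i) v)\<bar>))"
  proof (rule sum_mono)
    fix i
    have "norm (Y (adj (A i) h)) * norm (adj (A i) v) \<le> (norm (adj (A i) h) * K) * norm (adj (A i) v)"
      by (rule mult_right_mono[OF Y(1)]) simp
    then show "norm (Y (adj (A i) h)) * norm (adj (A i) v) \<le> K * (\<bar>norm (adj (A i) h)\<bar> * \<bar>norm (adj (A i) v)\<bar>)"
      by (simp add: mult_ac)
  qed
  also have "\<dots> = K * (\<Sum>i\<in>F. \<bar>norm (adj (A i) h)\<bar> * \<bar>norm (adj (A i) v)\<bar>)"
    by (simp add: sum_distrib_left)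
  also have "\<dots> \<le> K * (sqrt (p F h) * sqrt (p F v))"
  proof (rule mult_left_mono[OF _ Y(2)])
    show "(\<Sum>i\<in>F. \<bar>norm (adj (A i) h)\<bar> * \<bar>norm (adj (A i) v)\<bar>) \<le> sqrt (p F h) * sqrt (p F v)"
      using L2_set_mult_ineq[of "\<lambda>i. norm (adj (A i) h)" "\<lambda>i. norm (adj (A i) v)" F]
      unfolding L2_p .
  qed
  finally show ?thesis .
qed

lemma fin_bound:
  assumes Y: "\<And>v. norm (Y v) \<le> norm v * K" "K \<ge> 0"
    and F: "finite F" "F \<subseteq> I"
  shows "norm (\<Sum>i\<in>F. A i (Y (adj (A i) h))) \<le> K * sqrt Cb * sqrt (p F h)"
proof -
  define v where "v = (\<Sum>i\<in>F. A i (Y (adj (A i) h)))"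
  have B0: "K * sqrt Cb * sqrt (p F h) \<ge> 0" using Y(2) Cb(1) p_nonneg[of F h] by simp
  have "(norm v)^2 = Re (cinner v v)" by (rule norm_sq_cinner)
  also have "\<dots> \<le> K * (sqrt (p F h) * sqrt (p F v))"
    unfolding v_def[symmetric] by (rule inner_bound[OF Y F, of h v, folded v_def])
  also have "\<dots> \<le> K * (sqrt (p F h) * (sqrt Cb * norm v))"
  proof -
    have "sqrt (p F v) \<le> sqrt (Cb * (norm v)^2)" using Cb(2)[OF F] by simp
    also have "\<dots> = sqrt Cb * norm v" by (simp add: real_sqrt_mult)
    finally have "sqrt (p F v) \<le> sqrt Cb * norm v" .
    then show ?thesis using Y(2) p_nonneg[of F h] by (intro mult_left_mono) auto
  qed
  finally have le: "norm v * norm v \<le> norm v * (K * sqrt Cb * sqrt (p F h))"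
    by (simp add: power2_eq_square mult_ac)
  have "norm v \<le> K * sqrt Cb * sqrt (p F h)"
  proof (cases "norm v = 0")
    case True then show ?thesis using B0 by simp
  next
    case False then have "norm v > 0" by simp
    then show ?thesis using le by (rule mult_left_le_imp_le[rotated])
  qed
  then show ?thesis by (simp add: v_def)
qed

end

context setting begin
lemma phi_summable:
  assumes Y: "bounded_clinear Y"
  shows "(\<lambda>i. A i (Y (adj (A i) h))) summable_on I"
proof (rule summable_on_Cauchy_norm)
  fix e :: real assume e: "e > 0"
  obtain K where K: "K > 0" "\<And>x. norm (Y x) \<le> norm x * K" using bcl_bound[OF Y] by blast
  define M where "M = K * sqrt Cb + 1"
  have "K * sqrt Cb \<ge> 0" using K Cb(1) by simp
  then have M: "M > 0" "K * sqrt Cb < M" by (auto simp: M_def)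
  have d: "(e / M)^2 > 0" using e M by simp
  from has_sum_tail[OF Phi_has[of h] d] obtain F0 where F0: "finite F0" "F0 \<subseteq> I"
    "\<forall>F. finite F \<and> F \<subseteq> I - F0 \<longrightarrow> norm (\<Sum>i\<in>F. (norm (adj (A i) h))^2) < (e/M)^2"
    by (elim exE conjE) (rule that)
  have Fb: "norm (\<Sum>i\<in>F. A i (Y (adj (A i) h))) < e" if F: "finite F" "F \<subseteq> I - F0" for F
  proof -
    have "norm (\<Sum>i\<in>F. (norm (adj (A i) h))^2) < (e/M)^2" using F0(3) F by blast
    then have "p F h < (e/M)^2" using p_nonneg[of F h] by (simp add: p_def)
    then have "sqrt (p F h) < sqrt ((e/M)^2)" by (rule real_sqrt_less_mono)
    also have "sqrt ((e/M)^2) = e / M" using e M by simp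
    finally have sp: "sqrt (p F h) < e / M" .
    have "norm (\<Sum>i\<in>F. A i (Y (adj (A i) h))) \<le> K * sqrt Cb * sqrt (p F h)"
      using F K by (intro fin_bound[of Y K F h]) auto
    also have "\<dots> \<le> K * sqrt Cb * (e / M)"
      using sp K Cb(1) by (intro mult_left_mono) auto
    also have "\<dots> < M * (e / M)"
      using M e by (intro mult_strict_right_mono) auto
    also have "\<dots> = e" using M by simp
    finally show ?thesis .
  qed
  show "\<exists>F0. finite F0 \<and> F0 \<subseteq> I \<and> (\<forall>F. finite F \<and> F \<subseteq> I - F0 \<longrightarrow> norm (sum (\<lambda>i. A i (Y (adj (A i) h))) F) < e)"
    using Fb by (intro exI[of _ F0] conjI F0(1) F0(2) allI impI) auto
qed

lemma phi_has: "bounded_clinear Y \<Longrightarrow> ((\<lambda>i. A i (Y (adj (A i) h))) has_sum phiA A I Y h) I"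
  unfolding phiA_def using phi_summable by simp

lemma phi_bcl:
  assumes Y: "bounded_clinear Y"
  shows "bounded_clinear (phiA A I Y)"
proof -
  obtain K where K: "K > 0" "\<And>x. norm (Y x) \<le> norm x * K" using bcl_bound[OF Y] by blast
  have add: "phiA A I Y (x + y) = phiA A I Y x + phiA A I Y y" for x y
  proof -
    have "((\<lambda>i. A i (Y (adj (A i) x)) + A i (Y (adj (A i) y))) has_sum (phiA A I Y x + phiA A I Y y)) I"
      by (intro has_sum_add phi_has Y)
    moreover have "((\<lambda>i. A i (Y (adj (A i) (x + y)))) has_sum (phiA A I Y (x + y))) I"
      by (intro phi_has Y)
    moreover have "((\<lambda>i. A i (Y (adj (A i) (x + y)))) has_sum (phiA A I Y x + phiA A I Y y)) I"
      using calculation(1) by (rule has_sum_cong[THEN iffD1, rotated]) (simp add: adj_add bcl_linear(1)[OF Y] bcl_linear(1)[OF bcl])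
    ultimately show ?thesis using has_sum_unique by blast
  qed
  have scC: "phiA A I Y (scaleC c x) = scaleC c (phiA A I Y x)" for c x
  proof -
    have "((\<lambda>i. scaleC c (A i (Y (adj (A i) x)))) has_sum scaleC c (phiA A I Y x)) I"
      by (rule has_sum_bounded_linear[OF bl_scaleC phi_has[OF Y]])
    moreover have "((\<lambda>i. A i (Y (adj (A i) (scaleC c x)))) has_sum (phiA A I Y (scaleC c x))) I"
      by (intro phi_has Y)
    moreover have "((\<lambda>i. A i (Y (adj (A i) (scaleC c x)))) has_sum scaleC c (phiA A I Y x)) I"
      using calculation(1) by (rule has_sum_cong[THEN iffD1, rotated]) (simp add: adj_scaleC bcl_linear(5)[OF Y] bcl_linear(5)[OF bcl])
    ultimately show ?thesis using has_sum_unique by blast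
  qed
  have bl: "bounded_linear (phiA A I Y)"
  proof (rule bounded_linear_intro[where K="K * Cb"])
    show "phiA A I Y (x + y) = phiA A I Y x + phiA A I Y y" for x y by (rule add)
    show "phiA A I Y (scaleR r x) = scaleR r (phiA A I Y x)" for r x
      using scC[of "complex_of_real r" x] by (simp add: scaleR_scaleC)
    show "norm (phiA A I Y h) \<le> norm h * (K * Cb)" for h
    proof (rule has_sum_norm_le[OF phi_has[OF Y]])
      fix F assume F: "finite F" "F \<subseteq> I"
      have "norm (\<Sum>i\<in>F. A i (Y (adj (A i) h))) \<le> K * sqrt Cb * sqrt (p F h)"
        using F K by (intro fin_bound[of Y K F h]) auto
      also have "\<dots> \<le> K * sqrt Cb * sqrt (Cb * (norm h)^2)"
        using Cb(2)[OF F, of h] K Cb(1) by (intro mult_left_mono) auto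
      also have "\<dots> = norm h * (K * Cb)"
        using Cb(1) by (simp add: real_sqrt_mult mult_ac)
      finally show "norm (\<Sum>i\<in>F. A i (Y (adj (A i) h))) \<le> norm h * (K * Cb)" .
    qed
  qed
  show ?thesis using bl scC by (simp add: bounded_clinear_def)
qed

lemma phi_Qhas:
  assumes Y: "bounded_clinear Y"
  shows "((\<lambda>i. Re (cinner (Y (adj (A i) h)) (adj (A i) h))) has_sum Re (cinner (phiA A I Y h) h)) I"
proof -
  have "((\<lambda>i. Re (cinner (A i (Y (adj (A i) h))) h)) has_sum Re (cinner (phiA A I Y h) h)) I"
    by (rule has_sum_bounded_linear[OF bl_Re_inner phi_has[OF Y]])
  then show ?thesis by (rule has_sum_cong[THEN iffD1, rotated]) (simp add: adjA)
qed

lemma phi_Ihas: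
  assumes Y: "bounded_clinear Y"
  shows "((\<lambda>i. Im (cinner (Y (adj (A i) h)) (adj (A i) h))) has_sum Im (cinner (phiA A I Y h) h)) I"
proof -
  have "((\<lambda>i. Im (cinner (A i (Y (adj (A i) h))) h)) has_sum Im (cinner (phiA A I Y h) h)) I"
    by (rule has_sum_bounded_linear[OF bl_Im_inner phi_has[OF Y]])
  then show ?thesis by (rule has_sum_cong[THEN iffD1, rotated]) (simp add: adjA)
qed

lemma phi_pos:
  assumes Y: "positive_op Y"
  shows "positive_op (phiA A I Y)"
proof -
  have bY: "bounded_clinear Y" using Y by (simp add: positive_op_def)
  have "Im (cinner (phiA A I Y h) h) = 0" for h
  proof -
    have "((\<lambda>i. Im (cinner (Y (adj (A i) h)) (adj (A i) h))) has_sum 0) I"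
      using Y by (intro has_sum_0) (simp add: positive_op_def)
    with phi_Ihas[OF bY, of h] show ?thesis using has_sum_unique by blast
  qed
  moreover have "0 \<le> Re (cinner (phiA A I Y h) h)" for h
    using phi_Qhas[OF bY, of h] by (rule has_sum_nonneg) (simp add: pos_Q_nonneg[OF Y])
  ultimately show ?thesis using phi_bcl[OF bY] by (simp add: positive_op_def)
qed

lemma phi_mono:
  assumes Y: "positive_op Y" and Z: "positive_op Z" and YZ: "op_le Y Z"
  shows "op_le (phiA A I Y) (phiA A I Z)"
proof -
  have bY: "bounded_clinear Y" and bZ: "bounded_clinear Z" using Y Z by (auto simp: positive_op_def)
  have pY: "positive_op (phiA A I Y)" and pZ: "positive_op (phiA A I Z)" using phi_pos Y Z by auto
  have "Re (cinner (phiA A I Y h) h) \<le> Re (cinner (phiA A I Z h) h)" for h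
  proof (rule has_sum_mono[OF phi_Qhas[OF bY] phi_Qhas[OF bZ]])
    fix i
    have "0 \<le> Re (cinner (Z (adj (A i) h) - Y (adj (A i) h)) (adj (A i) h))"
      using YZ by (simp add: op_le_def positive_op_def)
    then show "Re (cinner (Y (adj (A i) h)) (adj (A i) h)) \<le> Re (cinner (Z (adj (A i) h)) (adj (A i) h))"
      by (simp add: cinner_diff_left)
  qed
  moreover have "Im (cinner (phiA A I Z h - phiA A I Y h) h) = 0" for h
    using pY pZ by (simp add: cinner_diff_left positive_op_def)
  ultimately show ?thesis
    using pY pZ
    by (simp add: op_le_def positive_op_def cinner_diff_left bcl_diff)
qed

end

lemma op_le_Q: "op_le Y Z \<Longrightarrow> Re (cinner (Y h) h) \<le> Re (cinner (Z h) h)"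
  by (simp add: op_le_def positive_op_def cinner_diff_left)

lemma op_le_of_Q:
  assumes "positive_op Y" "positive_op Z" "\<And>h. Re (cinner (Y h) h) \<le> Re (cinner (Z h) h)"
  shows "op_le Y Z"
  using assms by (simp add: op_le_def positive_op_def cinner_diff_left bcl_diff)

lemma has_sum_term_le:
  fixes f :: "'i \<Rightarrow> real"
  assumes "(f has_sum s) I" "\<And>j. j \<in> I \<Longrightarrow> 0 \<le> f j" "i \<in> I"
  shows "f i \<le> s"
  using finite_sum_le_has_sum[OF assms(1), of "{i}"] assms(2,3) by auto

context setting begin

lemma inv_sub:
  assumes M: "closed_csubspace M" "M \<noteq> {0}" "M \<noteq> UNIV"
    and inv: "\<And>i m. i \<in> I \<Longrightarrow> m \<in> M \<Longrightarrow> adj (A i) m \<in> M"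
  shows "\<exists>S. closed_csubspace S \<and> S \<noteq> {0} \<and> S \<noteq> UNIV \<and> (\<forall>i\<in>I. A i ` S \<subseteq> S)"
proof -
  define S where "S = {y. \<forall>m\<in>M. cinner y m = 0}"
  have "csubspace S"
    unfolding csubspace_def S_def by (auto simp: cinner_add_left cinner_scaleC_left)
  moreover have "closed S"
  proof -
    have "S = (\<Inter>m\<in>M. {y. cinner y m = 0})" by (auto simp: S_def)
    moreover have "closed {y. cinner y m = 0}" for m
      by (intro closed_Collect_eq continuous_on_const linear_continuous_on bl_cinner_left)
    ultimately show ?thesis by auto
  qed
  ultimately have cS: "closed_csubspace S" by (simp add: closed_csubspace_def)
  have M0: "0 \<in> M" using M(1) by (simp add: closed_csubspace_def csubspace_def)
  obtain m0 where m0: "m0 \<in> M" "m0 \<noteq> 0" using M(2) M0 by blast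
  have "cinner m0 m0 \<noteq> 0" using m0(2) by (simp add: cinner_eq_zero_iff)
  with m0(1) have "m0 \<notin> S" by (auto simp: S_def)
  then have SU: "S \<noteq> UNIV" by blast
  obtain w where w: "w \<noteq> 0" "\<And>m. m \<in> M \<Longrightarrow> cinner m w = 0" using proj_orth[OF M(1) M(3)] by blast
  have "w \<in> S" unfolding S_def using w(2) by (auto simp: cinner_commute[of w])
  then have S0: "S \<noteq> {0}" using w(1) by blast
  have "A i ` S \<subseteq> S" if i: "i \<in> I" for i
  proof
    fix z assume "z \<in> A i ` S"
    then obtain y where y: "y \<in> S" "z = A i y" by blast
    have "cinner (A i y) m = 0" if "m \<in> M" for m
      using adjA[OF i, of y m] inv[OF i that] y(1) by (simp add: S_def)
    then show "z \<in> S" using y by (simp add: S_def)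
  qed
  with cS SU S0 show ?thesis by blast
qed

end

locale xsetting = setting +
  fixes X :: "'a \<Rightarrow> 'a"
  assumes Xpos: "positive_op X" and Xsuper: "op_le (phiA A I X) X"
begin

abbreviation Xk :: "nat \<Rightarrow> 'a \<Rightarrow> 'a" where "Xk k \<equiv> (phiA A I ^^ k) X"

abbreviation Qk :: "nat \<Rightarrow> 'a \<Rightarrow> real" where "Qk k h \<equiv> Re (cinner (Xk k h) h)"

lemma Xk_Suc: "Xk (Suc k) = phiA A I (Xk k)" by simp

lemma Xk_pos: "positive_op (Xk k)"
  by (induction k) (simp_all add: Xpos phi_pos)

lemma Xk_bcl: "bounded_clinear (Xk k)"
  using Xk_pos by (simp add: positive_op_def)

lemma Xk_dec: "op_le (Xk (Suc k)) (Xk k)"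
proof (induction k)
  case 0 then show ?case using Xsuper by simp
next
  case (Suc k)
  then show ?case unfolding Xk_Suc[of "Suc k"] Xk_Suc[of k]
    by (intro phi_mono Xk_pos[unfolded Xk_Suc]) (simp_all add: Xk_pos[of "Suc k", simplified])
qed

lemma Qk_dec: "j \<le> k \<Longrightarrow> Qk k h \<le> Qk j h"
proof (induction k)
  case 0 then show ?case by simp
next
  case (Suc k)
  have "Qk (Suc k) h \<le> Qk k h" using op_le_Q[OF Xk_dec] .
  with Suc show ?case by (cases "j = Suc k") (auto simp: le_Suc_eq)
qed

lemma Qk_nonneg: "0 \<le> Qk k h" using pos_Q_nonneg[OF Xk_pos] .

lemma Qk_has: "((\<lambda>i. Qk k (adj (A i) h)) has_sum Qk (Suc k) h) I"
  using phi_Qhas[OF Xk_bcl[of k], of h] by simp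

lemma Qk_term: "i \<in> I \<Longrightarrow> Qk k (adj (A i) h) \<le> Qk (Suc k) h"
  by (rule has_sum_term_le[OF Qk_has]) (simp add: Qk_nonneg)

end

context xsetting begin
definition K0 :: real where "K0 = (SOME K. K > 0 \<and> (\<forall>x. norm (X x) \<le> norm x * K))"

lemma K0: "K0 > 0" "norm (X x) \<le> norm x * K0"
proof -
  have bX: "bounded_clinear X" using Xpos by (simp add: positive_op_def)
  have ex: "\<exists>K. K > 0 \<and> (\<forall>x. norm (X x) \<le> norm x * K)" using bcl_bound[OF bX] .
  have "K0 > 0 \<and> (\<forall>x. norm (X x) \<le> norm x * K0)"
    unfolding K0_def by (rule someI_ex[OF ex])
  then show "K0 > 0" "norm (X x) \<le> norm x * K0" by auto
qed

lemma Q0_bound: "Re (cinner (X g) g) \<le> K0 * (norm g)^2"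
proof -
  have "Re (cinner (X g) g) \<le> cmod (cinner (X g) g)" by (rule complex_Re_le_cmod)
  also have "\<dots> \<le> norm (X g) * norm g" by (rule cauchy_schwarz)
  also have "\<dots> \<le> norm g * K0 * norm g" by (intro mult_right_mono K0) simp
  finally show ?thesis by (simp add: power2_eq_square mult_ac)
qed

lemma Xk_sq: "(norm (Xk k h))^2 \<le> K0 * Qk k h"
proof (rule pos_bound[OF Xk_pos])
  fix g show "Qk k g \<le> K0 * (norm g)^2"
    using Qk_dec[of 0 k g] Q0_bound[of g] by simp
qed

lemma Xk_norm: "norm (Xk k h) \<le> K0 * norm h"
proof -
  have "(norm (Xk k h))^2 \<le> K0 * Qk k h" by (rule Xk_sq)
  also have "\<dots> \<le> K0 * (K0 * (norm h)^2)"
    using Qk_dec[of 0 k h] Q0_bound[of h] K0(1) by (intro mult_left_mono) auto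
  also have "\<dots> = (K0 * norm h)^2" by (simp add: power2_eq_square)
  finally have "(norm (Xk k h))^2 \<le> (K0 * norm h)^2" .
  then show ?thesis by (rule power2_le_imp_le) (use K0(1) in simp)
qed

lemma tends_iff_Q: "((\<lambda>k. Xk k h) \<longlonglongrightarrow> 0) \<longleftrightarrow> ((\<lambda>k. Qk k h) \<longlonglongrightarrow> 0)"
proof
  assume H: "(\<lambda>k. Xk k h) \<longlonglongrightarrow> 0"
  show "(\<lambda>k. Qk k h) \<longlonglongrightarrow> 0"
  proof (rule Lim_null_comparison)
    show "\<forall>\<^sub>F k in sequentially. norm (Qk k h) \<le> norm (Xk k h) * norm h"
    proof (rule always_eventually, rule allI)
      fix k
      have "norm (Qk k h) = Qk k h" using Qk_nonneg by simp
      also have "\<dots> \<le> cmod (cinner (Xk k h) h)" by (rule complex_Re_le_cmod)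
      also have "\<dots> \<le> norm (Xk k h) * norm h" by (rule cauchy_schwarz)
      finally show "norm (Qk k h) \<le> norm (Xk k h) * norm h" .
    qed
    show "(\<lambda>k. norm (Xk k h) * norm h) \<longlonglongrightarrow> 0"
      using tendsto_mult[OF tendsto_norm[OF H] tendsto_const[of "norm h"]] by simp
  qed
next
  assume H: "(\<lambda>k. Qk k h) \<longlonglongrightarrow> 0"
  have "(\<lambda>k. (norm (Xk k h))^2) \<longlonglongrightarrow> 0"
  proof (rule Lim_null_comparison)
    show "\<forall>\<^sub>F k in sequentially. norm ((norm (Xk k h))^2) \<le> K0 * Qk k h"
      using Xk_sq by simp
    show "(\<lambda>k. K0 * Qk k h) \<longlonglongrightarrow> 0" using tendsto_mult[OF tendsto_const H] by simp
  qed
  then have "(\<lambda>k. sqrt ((norm (Xk k h))^2)) \<longlonglongrightarrow> sqrt 0" by (rule tendsto_real_sqrt)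
  then have "(\<lambda>k. norm (Xk k h)) \<longlonglongrightarrow> 0" by simp
  then show "(\<lambda>k. Xk k h) \<longlonglongrightarrow> 0" by (simp add: tendsto_norm_zero_iff)
qed

end

context xsetting begin

lemma bX: "bounded_clinear X" using Xpos by (simp add: positive_op_def)

lemma case1:
  assumes ninj: "\<not> inj X" and nz: "X \<noteq> (\<lambda>h. 0)"
  shows "\<exists>S. closed_csubspace S \<and> S \<noteq> {0} \<and> S \<noteq> UNIV \<and> (\<forall>i\<in>I. A i ` S \<subseteq> S)"
proof (rule inv_sub)
  let ?M = "{h. X h = 0}"
  have "csubspace ?M" unfolding csubspace_def by (simp add: bcl_linear[OF bX])
  moreover have "closed ?M"
    by (intro closed_Collect_eq continuous_on_const linear_continuous_on bcl_bl[OF bX])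
  ultimately show "closed_csubspace ?M" by (simp add: closed_csubspace_def)
  obtain x y where xy: "x \<noteq> y" "X x = X y" using ninj by (auto simp: inj_def)
  have "x - y \<in> ?M" "x - y \<noteq> 0" using xy by (auto simp: bcl_linear[OF bX])
  then show "?M \<noteq> {0}" by blast
  obtain h where "X h \<noteq> 0" using nz by auto
  then show "?M \<noteq> UNIV" by blast
  fix i m assume i: "i \<in> I" and m: "m \<in> ?M"
  have "Qk 0 (adj (A i) m) \<le> Qk 1 m" using Qk_term[OF i, of 0 m] by simp
  also have "\<dots> \<le> Qk 0 m" by (rule Qk_dec) simp
  also have "\<dots> = 0" using m by simp
  finally have "Re (cinner (X (adj (A i) m)) (adj (A i) m)) = 0"
    using Qk_nonneg[of 0 "adj (A i) m"] by simp
  then show "adj (A i) m \<in> ?M" using pos_Q_zero[OF Xpos] by simp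
qed

lemma case2:
  assumes np: "\<not> (\<forall>h. (\<lambda>k. Xk k h) \<longlonglongrightarrow> 0)" and ex: "\<exists>h. h \<noteq> 0 \<and> (\<lambda>k. Xk k h) \<longlonglongrightarrow> 0"
  shows "\<exists>S. closed_csubspace S \<and> S \<noteq> {0} \<and> S \<noteq> UNIV \<and> (\<forall>i\<in>I. A i ` S \<subseteq> S)"
proof (rule inv_sub)
  let ?M = "{h. (\<lambda>k. Xk k h) \<longlonglongrightarrow> 0}"
  have "csubspace ?M"
    unfolding csubspace_def
  proof (intro conjI ballI allI)
    show "0 \<in> ?M" by (simp add: bcl_linear(3)[OF Xk_bcl])
    fix x y assume x: "x \<in> ?M" and y: "y \<in> ?M"
    show "x + y \<in> ?M"
      using tendsto_add[OF x[simplified] y[simplified]] by (simp add: bcl_linear(1)[OF Xk_bcl])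
  next
    fix c x assume x: "x \<in> ?M"
    show "scaleC c x \<in> ?M"
      using bounded_linear.tendsto[OF bl_scaleC x[simplified], of c] by (simp add: bcl_linear(5)[OF Xk_bcl])
  qed
  moreover have "closed ?M"
    unfolding closed_sequential_limits
  proof (intro allI impI, elim conjE)
    fix x l assume xM: "\<forall>n. x n \<in> ?M" and xl: "x \<longlonglongrightarrow> l"
    show "l \<in> ?M" unfolding mem_Collect_eq LIMSEQ_iff
    proof (intro allI impI)
      fix r :: real assume r: "r > 0"
      have "r / (2 * K0) > 0" using r K0(1) by simp
      then obtain n0 where n0: "\<forall>n\<ge>n0. norm (x n - l) < r / (2 * K0)" using xl unfolding LIMSEQ_iff by blast
      then have xn0: "norm (l - x n0) < r / (2 * K0)" by (simp add: norm_minus_commute)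
      have "(\<lambda>k. Xk k (x n0)) \<longlonglongrightarrow> 0" using xM by simp
      then obtain no where no: "\<forall>k\<ge>no. norm (Xk k (x n0) - 0) < r / 2" using r unfolding LIMSEQ_iff
        by (meson half_gt_zero)
      have "norm (Xk k l - 0) < r" if k: "k \<ge> no" for k
      proof -
        have "Xk k l = Xk k (x n0) + Xk k (l - x n0)" by (simp add: bcl_linear(2)[OF Xk_bcl])
        then have "norm (Xk k l) \<le> norm (Xk k (x n0)) + norm (Xk k (l - x n0))"
          by (metis norm_triangle_ineq)
        also have "\<dots> < r/2 + K0 * (r / (2 * K0))"
        proof (rule add_less_le_mono)
          show "norm (Xk k (x n0)) < r/2" using no k by simp
          have "norm (Xk k (l - x n0)) \<le> K0 * norm (l - x n0)" by (rule Xk_norm)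
          also have "\<dots> \<le> K0 * (r / (2 * K0))" using xn0 K0(1) by (intro mult_left_mono) auto
          finally show "norm (Xk k (l - x n0)) \<le> K0 * (r / (2 * K0))" .
        qed
        also have "\<dots> = r" using K0(1) by simp
        finally show ?thesis by simp
      qed
      then show "\<exists>no. \<forall>k\<ge>no. norm (Xk k l - 0) < r" by blast
    qed
  qed
  ultimately show "closed_csubspace ?M" by (simp add: closed_csubspace_def)
  show "?M \<noteq> {0}" using ex by blast
  show "?M \<noteq> UNIV" using np by blast
  fix i m assume i: "i \<in> I" and m: "m \<in> ?M"
  have "(\<lambda>k. Qk k m) \<longlonglongrightarrow> 0" using m tends_iff_Q by simp
  then have Q1: "(\<lambda>k. Qk (Suc k) m) \<longlonglongrightarrow> 0" by (rule LIMSEQ_Suc)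
  have "(\<lambda>k. Qk k (adj (A i) m)) \<longlonglongrightarrow> 0"
  proof (rule Lim_null_comparison[OF _ Q1])
    show "\<forall>\<^sub>F k in sequentially. norm (Qk k (adj (A i) m)) \<le> Qk (Suc k) m"
      using Qk_term[OF i] Qk_nonneg by (intro always_eventually allI) simp
  qed
  then show "adj (A i) m \<in> ?M" using tends_iff_Q by simp
qed

lemma case3:
  assumes ne: "phiA A I X \<noteq> X" and ex: "\<exists>h. h \<noteq> 0 \<and> (\<forall>k\<ge>1. Xk k h = X h)"
  shows "\<exists>S. closed_csubspace S \<and> S \<noteq> {0} \<and> S \<noteq> UNIV \<and> (\<forall>i\<in>I. A i ` S \<subseteq> S)"
proof (rule inv_sub)
  let ?M = "{h. \<forall>k. Xk k h = X h}"
  have "csubspace ?M"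
    unfolding csubspace_def
    by (simp add: bcl_linear(1,3,5)[OF Xk_bcl] bcl_linear(1,3,5)[OF bX])
  moreover have "closed ?M"
  proof -
    have "?M = (\<Inter>k. {h. Xk k h - X h = 0})" by auto
    moreover have "closed {h. Xk k h - X h = 0}" for k
      by (intro closed_Collect_eq continuous_on_const continuous_on_diff linear_continuous_on
          bcl_bl[OF bX] bcl_bl[OF Xk_bcl])
    ultimately show ?thesis by auto
  qed
  ultimately show "closed_csubspace ?M" by (simp add: closed_csubspace_def)
  obtain h0 where h0: "h0 \<noteq> 0" "\<And>k. k \<ge> 1 \<Longrightarrow> Xk k h0 = X h0" using ex by blast
  have "Xk k h0 = X h0" for k using h0(2)[of k] by (cases k) auto
  then have "h0 \<in> ?M" by simp
  then show "?M \<noteq> {0}" using h0(1) by blast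
  show "?M \<noteq> UNIV"
  proof
    assume "?M = UNIV"
    then have "Xk 1 h = X h" for h by blast
    then have "phiA A I X = X" by (intro ext) simp
    with ne show False by simp
  qed
  fix i m assume i: "i \<in> I" and m: "m \<in> ?M"
  show "adj (A i) m \<in> ?M"
  proof (simp, intro allI)
    fix k
    let ?f = "\<lambda>j. Qk 0 (adj (A j) m) - Qk k (adj (A j) m)"
    have h0s: "((\<lambda>j. Qk 0 (adj (A j) m)) has_sum Qk 1 m) I" using Qk_has[of 0 m] by simp
    have hks: "((\<lambda>j. (-1) * Qk k (adj (A j) m)) has_sum (-1) * Qk (Suc k) m) I"
      by (rule has_sum_cmult_right[OF Qk_has])
    have "(?f has_sum (Qk 1 m + (-1) * Qk (Suc k) m)) I"
      using has_sum_add[OF h0s hks] by simp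
    moreover have "Qk 1 m = Qk 0 m" "Qk (Suc k) m = Qk 0 m" using m by (simp_all only: mem_Collect_eq)
    ultimately have fs: "(?f has_sum 0) I" by simp
    have fnn: "0 \<le> ?f j" for j using Qk_dec[of 0 k "adj (A j) m"] by simp
    have "?f i \<le> 0" by (rule has_sum_term_le[OF fs fnn i])
    with fnn[of i] have f0: "?f i = 0" by linarith
    have "op_le (Xk k) X"
      by (rule op_le_of_Q[OF Xk_pos Xpos]) (use Qk_dec[of 0 k] in simp)
    then have D: "positive_op (\<lambda>g. X g - Xk k g)" by (simp add: op_le_def)
    have "Re (cinner (X (adj (A i) m) - Xk k (adj (A i) m)) (adj (A i) m)) = 0"
      using f0 by (simp add: cinner_diff_left)
    then have "X (adj (A i) m) - Xk k (adj (A i) m) = 0"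
      using pos_Q_zero[OF D, of "adj (A i) m"] by simp
    then show "Xk k (adj (A i) m) = X (adj (A i) m)" by simp
  qed
qed

end

theorem theorem4p3:
  fixes A :: "nat \<Rightarrow> 'a::chilbert \<Rightarrow> 'a"
    and I :: "nat set"
    and X :: "'a \<Rightarrow> 'a"
  assumes index: "(\<exists>n. I = {1..n}) \<or> I = {1..}"
    and bounded: "\<forall>i\<in>I. bounded_clinear (A i)"
    and normal: "\<forall>h. (\<lambda>i. A i (adj (A i) h)) summable_on I"
    and Xpos: "positive_op X"
    and Xnz: "X \<noteq> (\<lambda>h. 0)"
    and Xsuper: "op_le (phiA A I X) X"
    and cases:
      "\<not> inj X
       \<or> ((\<not> (\<forall>h. (\<lambda>k. ((phiA A I ^^ k) X) h) \<longlonglongrightarrow> 0))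
           \<and> (\<exists>h. h \<noteq> 0 \<and> (\<lambda>k. ((phiA A I ^^ k) X) h) \<longlonglongrightarrow> 0))
       \<or> (phiA A I X \<noteq> X
           \<and> (\<exists>h. h \<noteq> 0 \<and> (\<forall>k\<ge>1. ((phiA A I ^^ k) X) h = X h)))"
  shows "\<exists>S. closed_csubspace S \<and> S \<noteq> {0} \<and> S \<noteq> UNIV \<and> (\<forall>i\<in>I. A i ` S \<subseteq> S)"
proof -
  interpret xsetting A I X
    by unfold_locales (use bounded normal Xpos Xsuper in auto)
  from cases show ?thesis
  proof (elim disjE conjE)
    assume "\<not> inj X" then show ?thesis using case1 Xnz by blast
  next
    assume "\<not> (\<forall>h. (\<lambda>k. ((phiA A I ^^ k) X) h) \<longlonglongrightarrow> 0)"
      "\<exists>h. h \<noteq> 0 \<and> (\<lambda>k. ((phiA A I ^^ k) X) h) \<longlonglongrightarrow> 0"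
    then show ?thesis by (rule case2)
  next
    assume "phiA A I X \<noteq> X" "\<exists>h. h \<noteq> 0 \<and> (\<forall>k\<ge>1. ((phiA A I ^^ k) X) h = X h)"
    then show ?thesis by (rule case3)
  qed
qed


end
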